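(* (Provable in $\mathrm{ACA}_0$.) Let $X$ be a well-quasi-ordered set. Then the relation $<_2$ on $([X]^{<\omega})^{<\omega}$ is well-founded: there is no infinite sequence $s(0)>_2 s(1)>_2 s(2)>_2\cdots$ of elements of $([X]^{<\omega})^{<\omega}$.
   Context: A well-quasi-order is a quasi-order in which every infinite sequence $x_0,x_1,\dots$ has $i<j$ with $x_i\le x_j$. $[X]^{<\omega}$ is the set of finite subsets of $X$ and $([X]^{<\omega})^{<\omega}$ the set of finite sequences of such. On $[X]^{<\omega}$: $\{y_1,\dots,y_n\}\le_1\{z_1,\dots,z_m\}$ iff for every $j\le m$ there is $i\le n$ with $y_i\le z_j$; $<_1$ is its strict part. On $([X]^{<\omega})^{<\omega}$: $\langle\rho_1,\dots,\rho_n\rangle<_2\langle\sigma_1,\dots,\sigma_m\rangle$ iff there is $f:\{1,\dots,n\}\to\{1,\dots,m\}$ such that $\rho_i\le_1\sigma_{f(i)}$ for all $i\le n$, $\rho_i<_1\sigma_{f(i)}$ for some $i\le n$, and $\rho_i<_1\sigma_{f(i)}$ whenever $i\ne j$ and $f(i)=f(j)$. *)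

theory Defs
  imports Main
begin

definition qo_on :: "'a set \<Rightarrow> ('a \<Rightarrow> 'a \<Rightarrow> bool) \<Rightarrow> bool" where
  "qo_on X le \<longleftrightarrow> (\<forall>x\<in>X. le x x) \<and>
     (\<forall>x\<in>X. \<forall>y\<in>X. \<forall>z\<in>X. le x y \<longrightarrow> le y z \<longrightarrow> le x z)"

definition wqo_on :: "'a set \<Rightarrow> ('a \<Rightarrow> 'a \<Rightarrow> bool) \<Rightarrow> bool" where
  "wqo_on X le \<longleftrightarrow> qo_on X le \<and>
     (\<forall>f::nat \<Rightarrow> 'a. (\<forall>n. f n \<in> X) \<longrightarrow> (\<exists>i j. i < j \<and> le (f i) (f j)))"

definition fin_subsets :: "'a set \<Rightarrow> 'a set set" where
  "fin_subsets X = {A. finite A \<and> A \<subseteq> X}"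

definition fin_seqs :: "'a set \<Rightarrow> 'a set list set" where
  "fin_seqs X = {s. set s \<subseteq> fin_subsets X}"

definition le1 :: "('a \<Rightarrow> 'a \<Rightarrow> bool) \<Rightarrow> 'a set \<Rightarrow> 'a set \<Rightarrow> bool" where
  "le1 le A B \<longleftrightarrow> (\<forall>z\<in>B. \<exists>y\<in>A. le y z)"

definition less1 :: "('a \<Rightarrow> 'a \<Rightarrow> bool) \<Rightarrow> 'a set \<Rightarrow> 'a set \<Rightarrow> bool" where
  "less1 le A B \<longleftrightarrow> le1 le A B \<and> \<not> le1 le B A"

definition less2 :: "('a \<Rightarrow> 'a \<Rightarrow> bool) \<Rightarrow> 'a set list \<Rightarrow> 'a set list \<Rightarrow> bool" where
  "less2 le r s \<longleftrightarrow> (\<exists>f. (\<forall>i<length r. f i < length s) \<and>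
      (\<forall>i<length r. le1 le (r ! i) (s ! f i)) \<and>
      (\<exists>i<length r. less1 le (r ! i) (s ! f i)) \<and>
      (\<forall>i<length r. \<forall>j<length r. i \<noteq> j \<and> f i = f j \<longrightarrow> less1 le (r ! i) (s ! f i)))"

end

theory Submission
  imports Defs "HOL-Library.Multiset"
begin

definition up :: "'a set \<Rightarrow> ('a \<Rightarrow> 'a \<Rightarrow> bool) \<Rightarrow> 'a set \<Rightarrow> 'a set" where
  "up X le A = {x\<in>X. \<exists>y\<in>A. le y x}"

definition Rel :: "'a set \<Rightarrow> ('a \<Rightarrow> 'a \<Rightarrow> bool) \<Rightarrow> ('a set \<times> 'a set) set" where
  "Rel X le = {(U,V). V \<subset> U \<and> U \<subseteq> X \<and> (\<forall>x\<in>V. \<forall>y\<in>X. le x y \<longrightarrow> y \<in> V)}"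

lemma up_le1:
  assumes q: "qo_on X le" and A: "A \<subseteq> X" and B: "B \<subseteq> X"
  shows "le1 le A B \<longleftrightarrow> up X le B \<subseteq> up X le A"
proof
  assume h: "le1 le A B"
  show "up X le B \<subseteq> up X le A"
  proof
    fix x assume "x \<in> up X le B"
    then obtain y where y: "x \<in> X" "y \<in> B" "le y x" unfolding up_def by auto
    then obtain z where z: "z \<in> A" "le z y" using h unfolding le1_def by auto
    have "le z x" using q z y A B unfolding qo_on_def by blast
    then show "x \<in> up X le A" using y z unfolding up_def by auto
  qed
next
  assume h: "up X le B \<subseteq> up X le A"
  show "le1 le A B" unfolding le1_def
  proof
    fix z assume z: "z \<in> B"
    then have "z \<in> up X le B" using q B unfolding up_def qo_on_def by blast
    then show "\<exists>y\<in>A. le y z" using h unfolding up_def by auto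
  qed
qed

lemma up_less1:
  assumes q: "qo_on X le" and A: "A \<subseteq> X" and B: "B \<subseteq> X"
  shows "less1 le A B \<longleftrightarrow> up X le B \<subset> up X le A"
  using up_le1[OF q A B] up_le1[OF q B A] unfolding less1_def by auto

lemma up_closed:
  assumes q: "qo_on X le" and A: "A \<subseteq> X"
  shows "\<forall>x\<in>up X le A. \<forall>y\<in>X. le x y \<longrightarrow> y \<in> up X le A"
  using q A unfolding up_def qo_on_def by blast

lemma wf_Rel:
  assumes w: "wqo_on X le"
  shows "wf (Rel X le)"
  unfolding wf_iff_no_infinite_down_chain
proof
  assume "\<exists>f. \<forall>i. (f (Suc i), f i) \<in> Rel X le"
  then obtain f where f: "\<And>i. (f (Suc i), f i) \<in> Rel X le" by blast
  have mono: "f i \<subseteq> f j" if "i \<le> j" for i j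
    using that
  proof (induction j)
    case 0 then show ?case by simp
  next
    case (Suc j)
    show ?case
    proof (cases "i = Suc j")
      case True then show ?thesis by simp
    next
      case False
      then have "f i \<subseteq> f j" using Suc by simp
      moreover have "f j \<subseteq> f (Suc j)" using f[of j] unfolding Rel_def by auto
      ultimately show ?thesis by blast
    qed
  qed
  have "\<forall>i. \<exists>x. x \<in> f (Suc i) - f i" using f unfolding Rel_def by blast
  then obtain x where x: "\<And>i. x i \<in> f (Suc i) - f i" by metis
  have xX: "x i \<in> X" for i using x[of i] f[of i] unfolding Rel_def by auto
  then obtain i j where ij: "i < j" "le (x i) (x j)" using w unfolding wqo_on_def by blast
  have "x i \<in> f j" using mono[of "Suc i" j] ij x[of i] by auto
  then have "x j \<in> f j" using f[of j] ij xX[of j] unfolding Rel_def by auto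
  then show False using x[of j] by auto
qed

lemma mset_list_nth: "mset r = image_mset (\<lambda>i. r ! i) (mset_set {..<length r})"
proof -
  have "r = map (\<lambda>i. r ! i) [0..<length r]" by (simp add: map_nth)
  then have "mset r = mset (map (\<lambda>i. r ! i) [0..<length r])" by simp
  also have "\<dots> = image_mset (\<lambda>i. r ! i) (mset_set {..<length r})"
    by (simp add: atLeast0LessThan)
  finally show ?thesis .
qed

lemma step:
  assumes q: "qo_on X le" and r: "r \<in> fin_seqs X" and s: "s \<in> fin_seqs X"
    and l: "less2 le r s"
  shows "(image_mset (up X le) (mset r), image_mset (up X le) (mset s)) \<in> mult (Rel X le)"
proof -
  from l obtain f where f1: "\<forall>i<length r. f i < length s"
    and f2: "\<forall>i<length r. le1 le (r ! i) (s ! f i)"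
    and f3: "\<exists>i<length r. less1 le (r ! i) (s ! f i)"
    and f4: "\<forall>i<length r. \<forall>j<length r. i \<noteq> j \<and> f i = f j \<longrightarrow> less1 le (r ! i) (s ! f i)"
    unfolding less2_def by blast
  have rX: "r ! i \<subseteq> X" if "i < length r" for i
    using r that unfolding fin_seqs_def fin_subsets_def by (auto dest!: nth_mem)
  have sX: "s ! j \<subseteq> X" if "j < length s" for j
    using s that unfolding fin_seqs_def fin_subsets_def by (auto dest!: nth_mem)
  let ?u = "up X le"
  define S where "S = {i. i < length r \<and> less1 le (r ! i) (s ! f i)}"
  define E where "E = {i. i < length r \<and> \<not> less1 le (r ! i) (s ! f i)}"
  have fin: "finite S" "finite E" unfolding S_def E_def by auto
  have un: "{..<length r} = E \<union> S" "E \<inter> S = {}" unfolding S_def E_def by auto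
  have injE: "inj_on f E"
    unfolding inj_on_def E_def using f4 by blast
  have disj: "f ` E \<inter> f ` S = {}"
  proof (rule ccontr)
    assume "f ` E \<inter> f ` S \<noteq> {}"
    then obtain a b where ab: "a \<in> E" "b \<in> S" "f a = f b" by blast
    then have "a \<noteq> b" unfolding E_def S_def by auto
    then have "less1 le (r ! a) (s ! f a)" using f4 ab unfolding E_def S_def by blast
    then show False using ab unfolding E_def by auto
  qed
  have eqE: "?u (r ! i) = ?u (s ! f i)" if "i \<in> E" for i
  proof -
    have "i < length r" using that unfolding E_def by auto
    moreover have fi: "f i < length s" using f1 \<open>i < length r\<close> by auto
    ultimately have a: "?u (s ! f i) \<subseteq> ?u (r ! i)" and b: "\<not> ?u (s ! f i) \<subset> ?u (r ! i)"
      using that f2 up_le1[OF q rX[of i] sX[of "f i"]] up_less1[OF q rX[of i] sX[of "f i"]]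
      unfolding E_def by auto
    then show ?thesis by blast
  qed
  define I where "I = image_mset (\<lambda>i. ?u (r ! i)) (mset_set E)"
  define K where "K = image_mset (\<lambda>i. ?u (r ! i)) (mset_set S)"
  define T where "T = {..<length s} - f ` E"
  define J where "J = image_mset (\<lambda>j. ?u (s ! j)) (mset_set T)"
  have comp: "\<And>g h A. image_mset g (image_mset h A) = image_mset (\<lambda>x. g (h x)) A"
    by (simp add: multiset.map_comp o_def)
  have M: "image_mset ?u (mset r) = I + K"
    unfolding mset_list_nth I_def K_def un(1) comp
    using mset_set_Union[OF fin(2) fin(1) un(2)] image_mset_union by metis
  have IE: "I = image_mset (\<lambda>j. ?u (s ! j)) (mset_set (f ` E))"
  proof -
    have "I = image_mset (\<lambda>i. ?u (s ! f i)) (mset_set E)"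
      unfolding I_def using eqE by (intro image_mset_cong) (simp add: fin)
    also have "\<dots> = image_mset (\<lambda>j. ?u (s ! j)) (image_mset f (mset_set E))"
      by (simp add: image_mset.compositionality o_def)
    also have "\<dots> = image_mset (\<lambda>j. ?u (s ! j)) (mset_set (f ` E))"
      using image_mset_mset_set[OF injE] by simp
    finally show ?thesis .
  qed
  have fEs: "f ` E \<subseteq> {..<length s}" using f1 unfolding E_def by auto
  have N: "image_mset ?u (mset s) = I + J"
  proof -
    have "{..<length s} = f ` E \<union> T" "f ` E \<inter> T = {}" unfolding T_def using fEs by auto
    then show ?thesis unfolding mset_list_nth IE J_def comp
      using mset_set_Union[of "f ` E" T] fin image_mset_union by (metis finite_imageI finite_Diff finite_lessThan T_def)
  qed
  have fST: "f ` S \<subseteq> T" unfolding T_def using disj f1 unfolding S_def by auto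
  have finT: "finite T" unfolding T_def by auto
  obtain i0 where i0: "i0 \<in> S" using f3 unfolding S_def by auto
  have "f i0 \<in> T" using fST i0 by auto
  then have "T \<noteq> {}" by auto
  then have "J \<noteq> {#}" unfolding J_def using finT mset_set_empty_iff[of T] by simp
  moreover have "\<forall>k\<in>#K. \<exists>j\<in>#J. (k, j) \<in> Rel X le"
  proof
    fix k assume "k \<in># K"
    then obtain i where i: "i \<in> S" "k = ?u (r ! i)" unfolding K_def using fin by auto
    have il: "i < length r" using i unfolding S_def by auto
    have fi: "f i < length s" using f1 il by auto
    have "?u (s ! f i) \<in># J" unfolding J_def using fST i finT by auto
    moreover have "(k, ?u (s ! f i)) \<in> Rel X le"
    proof -
      have "?u (s ! f i) \<subset> k" using i up_less1[OF q rX[OF il] sX[OF fi]] unfolding S_def by auto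
      moreover have "k \<subseteq> X" unfolding i(2) up_def by blast
      ultimately show ?thesis unfolding Rel_def using up_closed[OF q sX[OF fi]] by blast
    qed
    ultimately show "\<exists>j\<in>#J. (k, j) \<in> Rel X le" by blast
  qed
  ultimately show ?thesis unfolding M N by (rule one_step_implies_mult)
qed

theorem lemma2:
  fixes X :: "'a set" and le :: "'a \<Rightarrow> 'a \<Rightarrow> bool"
  assumes "wqo_on X le"
  shows "\<not> (\<exists>s :: nat \<Rightarrow> 'a set list. (\<forall>n. s n \<in> fin_seqs X) \<and>
                (\<forall>n. less2 le (s (Suc n)) (s n)))"
proof
  assume "\<exists>s :: nat \<Rightarrow> 'a set list. (\<forall>n. s n \<in> fin_seqs X) \<and> (\<forall>n. less2 le (s (Suc n)) (s n))"
  then obtain s :: "nat \<Rightarrow> 'a set list" where s: "\<And>n. s n \<in> fin_seqs X"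
    "\<And>n. less2 le (s (Suc n)) (s n)" by blast
  have q: "qo_on X le" using assms unfolding wqo_on_def by auto
  have w: "wf (mult (Rel X le))" using wf_mult[OF wf_Rel[OF assms]] .
  have ch: "\<forall>i. ((\<lambda>n. image_mset (up X le) (mset (s n))) (Suc i),
      (\<lambda>n. image_mset (up X le) (mset (s n))) i) \<in> mult (Rel X le)"
    using step[OF q s(1) s(1) s(2)] by simp
  then have "\<exists>g. \<forall>i. (g (Suc i), g i) \<in> mult (Rel X le)"
    by (intro exI[of _ "\<lambda>n. image_mset (up X le) (mset (s n))"])
  then show False using w unfolding wf_iff_no_infinite_down_chain by blast
qed

end
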